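(* Under the setup below, for every $\mathbf{v}\in\mathbb{R}^E$, letting $\mathbf{d}=\mathbf{B}^\top\mathbf{W}^{1/2}\mathbf{v}$, $\mathbf{z}=\widetilde{\mathbf{\Gamma}}\mathbf{\Pi}^{(\eta-1)}\cdots\mathbf{\Pi}^{(0)}\mathbf{d}$ and $\widetilde{\mathbf{f}}=\sum_{H\in\mathcal{T}}\mathbf{M}^{(H)}\mathbf{z}|_{F_H}$, we have $\mathbf{B}^\top\mathbf{W}^{1/2}\widetilde{\mathbf{f}}=\mathbf{B}^\top\mathbf{W}^{1/2}\mathbf{v}$.
   Context: Setup. $G=(V,E)$ is a connected undirected graph with $|V|=n$, positive edge weights, $\mathbf{W}=\mathrm{diag}(\mathbf{w})$, signed incidence matrix $\mathbf{B}\in\mathbb{R}^{E\times V}$; for a region (edge-induced subgraph) $H$, $\mathbf{B}[H]$ is $\mathbf{B}$ with rows of edges not in $E(H)$ set to zero. All matrices/vectors are padded with zeros to $V$- or $E$-indexed dimensions; $\mathbf{x}|_S$ is $\mathbf{x}$ on $S$ and zero elsewhere; $\mathbf{I}$ is the $n\times n$ identity; $\mathbf{M}_{S,T}$ is the submatrix with rows $S$, columns $T$; $\mathbf{M}^{-1}$ is the Moore–Penrose pseudoinverse. $\mathcal{T}$ is a separator tree of $G$: a rooted binary tree of regions $H$ with vertex sets $\partial H$, $S(H)$, $F_H$, where the root is $G$ with $\partial G=\emptyset$, $F_G=S(G)$; a non-leaf node $H$ has two children $D_1,D_2$ whose edge sets partition $E(H)$ (no isolated vertices) with $V(D_1)\cap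 V(D_2)=S(H)$, $\partial D_j=(\partial H\cup S(H))\cap V(D_j)$, $F_H=S(H)\setminus\partial H$; a leaf has constantly many edges, $S(H)=\emptyset$, $F_H=V(H)\setminus\partial H$. The level $\eta(H)$ is the maximum number of edges on a tree path from $H$ down to a descendant (leaves 0); $\eta$ is the height; $\mathcal{T}(i)$ is the set of level-$i$ nodes; $\{F_H\}$ partitions $V$. Recursive Laplacians. For a leaf $H$, $\mathbf{L}^{(H)}=\mathbf{B}[H]^\top\mathbf{W}\mathbf{B}[H]$. For each node $D$ we are given a Laplacian $\widetilde{\mathrm{SC}}(\mathbf{L}^{(D)},\partial D)$ supported on $\partial D$; for a non-leaf $H$ with children $D_1,D_2$, $\mathbf{L}^{(H)}=\widetilde{\mathrm{SC}}(\mathbf{L}^{(D_1)},\partial D_1)+\widetilde{\mathrm{SC}}(\mathbf{L}^{(D_2)},\partial D_2)$. Assume each $\mathbf{L}^{(H)}$ is the Laplacian of a connected graph on vertex set $\partial H\cup F_H$. Operators. $\mathbf{X}^{(H)}=\mathbf{L}^{(H)}_{\partial H,F_H}(\mathbf{L}^{(H)}_{F_H,F_H})^{-1}$; $\mathbf{\Pi}^{(i)}=\mathbf{I}-\sum_{H\in\mathcal{T}(i)}\mathbf{X}^{(H)}$ for $0\le i\le\eta-1$; $\widetilde{\mathbf{\Gamma}}=\sum_{H\in\mathcal{T}}(\mathbf{L}^{(H)}_{F_H,F_H})^{-1}$. For a node $D$ with parent $P$, $\mathbf{M}_{(D,P)}=(\mathbf{L}^{(D)})^{-1}\widetilde{\mathrm{SC}}(\mathbf{L}^{(D)},\partial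 D)$; $\mathbf{M}^{(H)}=\mathbf{W}^{1/2}\mathbf{B}[H]$ for a leaf $H$, and $\mathbf{M}^{(H)}=\mathbf{M}^{(D_1)}\mathbf{M}_{(D_1,H)}+\mathbf{M}^{(D_2)}\mathbf{M}_{(D_2,H)}$ for a non-leaf $H$ with children $D_1,D_2$. *)

theory Defs
  imports "HOL-Analysis.Analysis"
begin

definition pinv :: "real^'n^'m \<Rightarrow> real^'m^'n" where
  "pinv A = (THE X. A ** X ** A = A \<and> X ** A ** X = X \<and>
                    transpose (A ** X) = A ** X \<and> transpose (X ** A) = X ** A)"

definition submat :: "real^'n^'m \<Rightarrow> 'm set \<Rightarrow> 'n set \<Rightarrow> real^'n^'m" where
  "submat A S T = (\<chi> i j. if i \<in> S \<and> j \<in> T then A $ i $ j else 0)"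

definition vrestr :: "real^'n \<Rightarrow> 'n set \<Rightarrow> real^'n" where
  "vrestr x S = (\<chi> i. if i \<in> S then x $ i else 0)"

definition diagm :: "('n \<Rightarrow> real) \<Rightarrow> real^'n^'n" where
  "diagm d = (\<chi> i j. if i = j then d i else 0)"

text \<open>An edge e has endpoints ends e = (a, b) (orientation arbitrary).
  Signed incidence matrix: row e has +1 at the first endpoint, -1 at the second.\<close>
definition incid :: "('e \<Rightarrow> 'v \<times> 'v) \<Rightarrow> real^'v^'e" where
  "incid ends = (\<chi> e v. if v = fst (ends e) then 1 else if v = snd (ends e) then -1 else 0)"

definition incid_on :: "('e \<Rightarrow> 'v \<times> 'v) \<Rightarrow> 'e set \<Rightarrow> real^'v^'e" where
  "incid_on ends EH = (\<chi> e v. if e \<in> EH then incid ends $ e $ v else 0)"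

definition adj :: "('e \<Rightarrow> 'v \<times> 'v) \<Rightarrow> ('v \<times> 'v) set" where
  "adj ends = {(a, b). \<exists>e. ends e = (a, b) \<or> ends e = (b, a)}"

definition graph_connected :: "('e \<Rightarrow> 'v \<times> 'v) \<Rightarrow> bool" where
  "graph_connected ends \<longleftrightarrow> (\<forall>u v. (u, v) \<in> (adj ends)\<^sup>*)"

definition Vof :: "('e \<Rightarrow> 'v \<times> 'v) \<Rightarrow> 'e set \<Rightarrow> 'v set" where
  "Vof ends EH = (\<Union>e\<in>EH. {fst (ends e), snd (ends e)})"

definition laplacian_on :: "'v set \<Rightarrow> real^'v^'v \<Rightarrow> bool" where
  "laplacian_on S A \<longleftrightarrow> transpose A = A \<and>
     (\<forall>i j. i \<noteq> j \<longrightarrow> A $ i $ j \<le> 0) \<and>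
     (\<forall>i. (\<Sum>j\<in>UNIV. A $ i $ j) = 0) \<and>
     (\<forall>i j. A $ i $ j \<noteq> 0 \<longrightarrow> i \<in> S \<and> j \<in> S)"

definition connected_laplacian_on :: "'v set \<Rightarrow> real^'v^'v \<Rightarrow> bool" where
  "connected_laplacian_on S A \<longleftrightarrow> laplacian_on S A \<and>
     (\<forall>u\<in>S. \<forall>v\<in>S. (u, v) \<in> {(i, j). i \<noteq> j \<and> A $ i $ j \<noteq> 0}\<^sup>*)"

text \<open>Rooted binary tree of node identifiers; the data of node h is given by functions
  RE h (edge set E(H)), Bd h (boundary), Sep h (separator S(H)), SC h (the given
  approximate Schur complement).\<close>
datatype 'n stree = Lf 'n | Nd 'n "'n stree" "'n stree"

fun rt :: "'n stree \<Rightarrow> 'n" where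
  "rt (Lf h) = h" | "rt (Nd h l r) = h"

fun subtrees :: "'n stree \<Rightarrow> 'n stree list" where
  "subtrees (Lf h) = [Lf h]"
| "subtrees (Nd h l r) = Nd h l r # subtrees l @ subtrees r"

text \<open>Level eta(H): maximal number of tree edges on a downward path.\<close>
fun height :: "'n stree \<Rightarrow> nat" where
  "height (Lf h) = 0"
| "height (Nd h l r) = Suc (max (height l) (height r))"

fun sep_tree_ok :: "('e \<Rightarrow> 'v \<times> 'v) \<Rightarrow> ('n \<Rightarrow> 'e set) \<Rightarrow> ('n \<Rightarrow> 'v set)
                    \<Rightarrow> ('n \<Rightarrow> 'v set) \<Rightarrow> 'n stree \<Rightarrow> bool" where
  "sep_tree_ok ends RE Bd Sep (Lf h) \<longleftrightarrow> Sep h = {}"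
| "sep_tree_ok ends RE Bd Sep (Nd h l r) \<longleftrightarrow>
     RE (rt l) \<union> RE (rt r) = RE h \<and> RE (rt l) \<inter> RE (rt r) = {} \<and>
     Vof ends (RE (rt l)) \<inter> Vof ends (RE (rt r)) = Sep h \<and>
     Bd (rt l) = (Bd h \<union> Sep h) \<inter> Vof ends (RE (rt l)) \<and>
     Bd (rt r) = (Bd h \<union> Sep h) \<inter> Vof ends (RE (rt r)) \<and>
     sep_tree_ok ends RE Bd Sep l \<and> sep_tree_ok ends RE Bd Sep r"

fun Fset :: "('e \<Rightarrow> 'v \<times> 'v) \<Rightarrow> ('n \<Rightarrow> 'e set) \<Rightarrow> ('n \<Rightarrow> 'v set)
             \<Rightarrow> ('n \<Rightarrow> 'v set) \<Rightarrow> 'n stree \<Rightarrow> 'v set" where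
  "Fset ends RE Bd Sep (Lf h) = Vof ends (RE h) - Bd h"
| "Fset ends RE Bd Sep (Nd h l r) = Sep h - Bd h"

fun Lap :: "('e::finite \<Rightarrow> 'v::finite \<times> 'v) \<Rightarrow> ('e \<Rightarrow> real) \<Rightarrow> ('n \<Rightarrow> 'e set)
            \<Rightarrow> ('n \<Rightarrow> real^'v^'v) \<Rightarrow> 'n stree \<Rightarrow> real^'v^'v" where
  "Lap ends w RE SC (Lf h) =
     transpose (incid_on ends (RE h)) ** diagm w ** incid_on ends (RE h)"
| "Lap ends w RE SC (Nd h l r) = SC (rt l) + SC (rt r)"

fun Mrec :: "('e::finite \<Rightarrow> 'v::finite \<times> 'v) \<Rightarrow> ('e \<Rightarrow> real) \<Rightarrow> ('n \<Rightarrow> 'e set)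
            \<Rightarrow> ('n \<Rightarrow> real^'v^'v) \<Rightarrow> 'n stree \<Rightarrow> real^'v^'e" where
  "Mrec ends w RE SC (Lf h) = diagm (\<lambda>e. sqrt (w e)) ** incid_on ends (RE h)"
| "Mrec ends w RE SC (Nd h l r) =
     Mrec ends w RE SC l ** (pinv (Lap ends w RE SC l) ** SC (rt l)) +
     Mrec ends w RE SC r ** (pinv (Lap ends w RE SC r) ** SC (rt r))"

definition Xop :: "('e::finite \<Rightarrow> 'v::finite \<times> 'v) \<Rightarrow> ('e \<Rightarrow> real) \<Rightarrow> ('n \<Rightarrow> 'e set)
            \<Rightarrow> ('n \<Rightarrow> 'v set) \<Rightarrow> ('n \<Rightarrow> 'v set) \<Rightarrow> ('n \<Rightarrow> real^'v^'v) \<Rightarrow> 'n stree \<Rightarrow> real^'v^'v" where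
  "Xop ends w RE Bd Sep SC t =
     submat (Lap ends w RE SC t) (Bd (rt t)) (Fset ends RE Bd Sep t) **
     pinv (submat (Lap ends w RE SC t) (Fset ends RE Bd Sep t) (Fset ends RE Bd Sep t))"

definition PiOp :: "('e::finite \<Rightarrow> 'v::finite \<times> 'v) \<Rightarrow> ('e \<Rightarrow> real) \<Rightarrow> ('n \<Rightarrow> 'e set)
            \<Rightarrow> ('n \<Rightarrow> 'v set) \<Rightarrow> ('n \<Rightarrow> 'v set) \<Rightarrow> ('n \<Rightarrow> real^'v^'v) \<Rightarrow> 'n stree \<Rightarrow> nat \<Rightarrow> real^'v^'v" where
  "PiOp ends w RE Bd Sep SC T i =
     mat 1 - sum_list (map (Xop ends w RE Bd Sep SC) (filter (\<lambda>t. height t = i) (subtrees T)))"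

fun PiProd :: "('e::finite \<Rightarrow> 'v::finite \<times> 'v) \<Rightarrow> ('e \<Rightarrow> real) \<Rightarrow> ('n \<Rightarrow> 'e set)
            \<Rightarrow> ('n \<Rightarrow> 'v set) \<Rightarrow> ('n \<Rightarrow> 'v set) \<Rightarrow> ('n \<Rightarrow> real^'v^'v) \<Rightarrow> 'n stree
            \<Rightarrow> nat \<Rightarrow> real^'v \<Rightarrow> real^'v" where
  "PiProd ends w RE Bd Sep SC T 0 d = d"
| "PiProd ends w RE Bd Sep SC T (Suc k) d =
     PiOp ends w RE Bd Sep SC T k *v PiProd ends w RE Bd Sep SC T k d"

definition GammaT :: "('e::finite \<Rightarrow> 'v::finite \<times> 'v) \<Rightarrow> ('e \<Rightarrow> real) \<Rightarrow> ('n \<Rightarrow> 'e set)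
            \<Rightarrow> ('n \<Rightarrow> 'v set) \<Rightarrow> ('n \<Rightarrow> 'v set) \<Rightarrow> ('n \<Rightarrow> real^'v^'v) \<Rightarrow> 'n stree \<Rightarrow> real^'v^'v" where
  "GammaT ends w RE Bd Sep SC T =
     sum_list (map (\<lambda>t. pinv (submat (Lap ends w RE SC t) (Fset ends RE Bd Sep t) (Fset ends RE Bd Sep t)))
                   (subtrees T))"

end

theory Submission
  imports Defs
begin

definition penrose :: "real^'n^'m \<Rightarrow> real^'m^'n \<Rightarrow> bool" where
  "penrose A X \<longleftrightarrow> A ** X ** A = A \<and> X ** A ** X = X \<and>
                    transpose (A ** X) = A ** X \<and> transpose (X ** A) = X ** A"

lemma sym_dot: "transpose A = A \<Longrightarrow> (A *v x) \<bullet> y = x \<bullet> (A *v (y::real^'n))"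
  by (metis dot_lmul_matrix vector_transpose_matrix)

lemma penrose_unique:
  assumes "penrose A X" "penrose A Y" shows "X = Y"
proof -
  have h1: "A ** X ** A = A" and h2: "X ** A ** X = X" and h3: "transpose (A ** X) = A ** X"
    and h4: "transpose (X ** A) = X ** A" using assms(1) by (auto simp: penrose_def)
  have k1: "A ** Y ** A = A" and k2: "Y ** A ** Y = Y" and k3: "transpose (A ** Y) = A ** Y"
    and k4: "transpose (Y ** A) = Y ** A" using assms(2) by (auto simp: penrose_def)
  have tA: "transpose A = transpose A ** (A ** Y)"
  proof -
    have "transpose A = transpose (A ** Y ** A)" using k1 by simp
    also have "\<dots> = transpose A ** transpose (A ** Y)" by (rule matrix_transpose_mul)
    finally show ?thesis using k3 by simp
  qed
  have "X = X ** (A ** X)" using h2 by (simp only: matrix_mul_assoc)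
  also have "\<dots> = X ** (transpose X ** transpose A)" using h3 by (simp only: matrix_transpose_mul)
  also have "\<dots> = X ** ((transpose X ** transpose A) ** (A ** Y))"
    by (subst tA) (simp only: matrix_mul_assoc)
  also have "\<dots> = X ** ((A ** X) ** (A ** Y))" using h3 by (simp only: matrix_transpose_mul)
  also have "\<dots> = (X ** A ** X) ** A ** Y" by (simp only: matrix_mul_assoc)
  also have "\<dots> = X ** A ** Y" using h2 by simp
  finally have eX: "X = X ** A ** Y" .
  have tA2: "transpose A = (X ** A) ** transpose A"
  proof -
    have "transpose A = transpose (A ** X ** A)" using h1 by simp
    also have "\<dots> = transpose (A ** (X ** A))" by (simp only: matrix_mul_assoc)
    also have "\<dots> = transpose (X ** A) ** transpose A" by (rule matrix_transpose_mul)
    finally show ?thesis using h4 by simp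
  qed
  have "Y = (Y ** A) ** Y" using k2 by simp
  also have "\<dots> = (transpose A ** transpose Y) ** Y" using k4 by (simp only: matrix_transpose_mul)
  also have "\<dots> = ((X ** A) ** (transpose A ** transpose Y)) ** Y"
    by (subst tA2) (simp only: matrix_mul_assoc)
  also have "\<dots> = ((X ** A) ** (Y ** A)) ** Y" using k4 by (simp only: matrix_transpose_mul)
  also have "\<dots> = X ** A ** (Y ** A ** Y)" by (simp only: matrix_mul_assoc)
  also have "\<dots> = X ** A ** Y" using k2 by simp
  finally show ?thesis using eX by simp
qed

lemma sym_from_dot:
  fixes M :: "real^'n^'n"
  assumes "\<And>x y. (M *v x) \<bullet> y = x \<bullet> (M *v y)"
  shows "transpose M = M"
proof -
  have "M $ i $ j = M $ j $ i" for i j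
  proof -
    have "(M *v axis j 1) \<bullet> axis i 1 = axis j 1 \<bullet> (M *v axis i 1)" by (rule assms)
    then show ?thesis
      by (simp add: inner_vec_def matrix_vector_mult_def axis_def if_distrib if_distribR cong del: if_weak_cong)
  qed
  then show ?thesis by (simp add: transpose_def vec_eq_iff)
qed
lemma pinv_exists_sym:
  fixes A :: "real^'n^'n"
  assumes sA: "transpose A = A"
  shows "\<exists>X. penrose A X"
proof -
  define R where "R = range ((*v) A)"
  have subR: "subspace R" unfolding R_def
    by (metis linear_subspace_image matrix_vector_mul_linear subspace_UNIV)
  have key: "A *v x = 0" if "A *v (A *v x) = 0" for x
  proof -
    have "(A *v x) \<bullet> (A *v x) = x \<bullet> (A *v (A *v x))" by (rule sym_dot[OF sA])
    then show ?thesis using that by simp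
  qed
  have inj: "inj_on ((*v) A) R"
  proof (rule inj_onI)
    fix x y assume "x \<in> R" "y \<in> R" "A *v x = A *v y"
    then obtain a b where "x = A *v a" "y = A *v b" by (auto simp: R_def)
    then have "A *v (A *v (a - b)) = 0" using \<open>A *v x = A *v y\<close>
      by (simp add: matrix_vector_mult_diff_distrib)
    then have "A *v (a - b) = 0" by (rule key)
    then show "x = y" using \<open>x = A *v a\<close> \<open>y = A *v b\<close> by (simp add: matrix_vector_mult_diff_distrib)
  qed
  have imgR: "(*v) A ` R = R"
  proof -
    have "(*v) A ` R \<subseteq> R" by (auto simp: R_def)
    moreover have "subspace ((*v) A ` R)"
      by (metis linear_subspace_image matrix_vector_mul_linear subR)
    moreover have "dim ((*v) A ` R) = dim R"
    proof -
      have "span R = R" using subR by (rule span_eq_iff[THEN iffD2])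
      then show ?thesis using dim_image_eq[of "(*v) A" R] inj by (simp del: span_eq_iff)
    qed
    ultimately show ?thesis using subspace_dim_equal subR by (metis order_refl)
  qed
  define g where "g y = (SOME r. r \<in> R \<and> A *v r = y)" for y
  have g_spec: "g y \<in> R \<and> A *v g y = y" if "y \<in> R" for y
  proof -
    have "\<exists>r. r \<in> R \<and> A *v r = y" using that imgR by (metis imageE)
    then show ?thesis unfolding g_def by (rule someI_ex)
  qed
  have g_eq: "g y = r" if "r \<in> R" "A *v r = y" for r y
  proof -
    have "y \<in> R" using that imgR by blast
    then show ?thesis using g_spec inj that by (metis inj_on_def)
  qed
  have AR: "A *v x \<in> R" for x by (simp add: R_def)
  define X0 where "X0 y = g (g (A *v y))" for y
  have gadd: "g (x + y) = g x + g y" if "x \<in> R" "y \<in> R" for x y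
    by (rule g_eq) (use that g_spec subR in \<open>auto simp: subspace_add matrix_vector_right_distrib\<close>)
  have gscale: "g (c *\<^sub>R x) = c *\<^sub>R g x" if "x \<in> R" for x c
    by (rule g_eq) (use that g_spec subR in \<open>auto simp: subspace_scale matrix_vector_mult_scaleR\<close>)
  have linX: "linear X0"
    unfolding linear_iff X0_def
    using gadd gscale g_spec AR
    by (simp add: matrix_vector_right_distrib matrix_vector_mult_scaleR)
  define Xm where "Xm = matrix X0"
  have Xm: "Xm *v y = X0 y" for y
    using matrix_vector_mul(2)[OF linX] unfolding Xm_def by metis
  define E where "E y = g (A *v y)" for y
  have AX: "(A ** Xm) *v y = E y" for y
    by (simp add: matrix_vector_mul_assoc[symmetric] Xm X0_def E_def g_spec AR)
  have XA: "(Xm ** A) *v y = E y" for y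
  proof -
    have "g (A *v (A *v y)) = A *v y" by (rule g_eq) (auto simp: AR)
    then show ?thesis by (simp add: matrix_vector_mul_assoc[symmetric] Xm X0_def E_def)
  qed
  have ER: "E x \<in> R" "A *v E x = A *v x" for x using g_spec AR by (auto simp: E_def)
  have Eid: "E r = r" if "r \<in> R" for r using that by (auto simp: E_def intro: g_eq)
  have orth: "r \<bullet> k = 0" if rR: "r \<in> R" and kz: "A *v k = 0" for r k
  proof -
    obtain z where "r = A *v z" using rR unfolding R_def by blast
    then show ?thesis using sym_dot[OF sA, of z k] kz by simp
  qed
  have Esym: "E x \<bullet> y = x \<bullet> E y" for x y
  proof -
    have "E x \<bullet> y = E x \<bullet> E y + E x \<bullet> (y - E y)" by (simp add: inner_diff_right)
    also have "E x \<bullet> (y - E y) = 0"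
      by (rule orth) (auto simp: ER matrix_vector_mult_diff_distrib)
    also have "x \<bullet> E y = E x \<bullet> E y + (x - E x) \<bullet> E y" by (simp add: inner_diff_left)
    moreover have "(x - E x) \<bullet> E y = 0"
      using orth[of "E y" "x - E x"] by (auto simp: ER matrix_vector_mult_diff_distrib inner_commute)
    ultimately show ?thesis by simp
  qed
  have "penrose A Xm"
    unfolding penrose_def
  proof (intro conjI)
    show "A ** Xm ** A = A"
      by (simp add: matrix_eq matrix_vector_mul_assoc[symmetric] AX[unfolded matrix_vector_mul_assoc[symmetric]] Eid AR)
    show "Xm ** A ** Xm = Xm"
      by (simp add: matrix_eq matrix_vector_mul_assoc[symmetric] XA[unfolded matrix_vector_mul_assoc[symmetric]] Eid Xm X0_def g_spec AR)
    show "transpose (A ** Xm) = A ** Xm" by (rule sym_from_dot) (simp add: AX Esym)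
    show "transpose (Xm ** A) = Xm ** A" by (rule sym_from_dot) (simp add: XA Esym)
  qed
  then show ?thesis ..
qed

lemma pinv_sym:
  fixes A :: "real^'n^'n"
  assumes "transpose A = A"
  shows "penrose A (pinv A)"
proof -
  obtain X where X: "penrose A X" using pinv_exists_sym[OF assms] by blast
  have "pinv A = X" unfolding pinv_def
    by (rule the_equality) (use X penrose_unique in \<open>auto simp: penrose_def\<close>)
  then show ?thesis using X by simp
qed

lemma penrose_AP: "penrose A X \<Longrightarrow> transpose A = A \<Longrightarrow> A ** (A ** X) = A"
  by (metis matrix_transpose_mul penrose_def)

lemma pinv_range:
  fixes A :: "real^'n^'n"
  assumes sA: "transpose A = A" and ker: "\<And>k. A *v k = 0 \<Longrightarrow> k \<bullet> c = 0"
  shows "A *v (pinv A *v c) = c"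
proof -
  define X where "X = pinv A"
  have pe: "penrose A X" using pinv_sym[OF sA] by (simp add: X_def)
  define P where "P = A ** X"
  have sP: "transpose P = P" using pe by (simp add: penrose_def P_def)
  have PP: "P ** P = P" using pe unfolding penrose_def P_def by (metis matrix_mul_assoc)
  have AP: "A ** P = A" using penrose_AP[OF pe sA] by (simp add: P_def)
  define k where "k = c - P *v c"
  have "A *v k = 0" by (simp add: k_def matrix_vector_mult_diff_distrib matrix_vector_mul_assoc AP)
  then have kc: "k \<bullet> c = 0" by (rule ker)
  have "(P *v c) \<bullet> (P *v c) = c \<bullet> (P *v (P *v c))" by (rule sym_dot[OF sP])
  also have "\<dots> = c \<bullet> (P *v c)" by (simp add: matrix_vector_mul_assoc PP)
  finally have "k \<bullet> (P *v c) = 0" by (simp add: k_def inner_diff_left)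
  then have "k \<bullet> k = 0" using kc by (simp add: k_def inner_diff_right)
  then have "k = 0" by simp
  then show ?thesis by (simp add: k_def X_def P_def matrix_vector_mul_assoc)
qed

lemma mv_restr:
  assumes "\<And>i j. A $ i $ j \<noteq> 0 \<Longrightarrow> j \<in> F"
  shows "A *v vrestr u F = A *v u"
  using assms by (auto simp: matrix_vector_mult_def vrestr_def vec_eq_iff intro!: sum.cong) (metis)

lemma mv_row0:
  assumes "\<And>j. A $ i $ j = 0"
  shows "(A *v u) $ i = 0"
  using assms by (simp add: matrix_vector_mult_def)

lemma pinv_support:
  fixes A :: "real^'n^'n"
  assumes sA: "transpose A = A" and supp: "\<And>i j. A $ i $ j \<noteq> 0 \<Longrightarrow> i \<in> F \<and> j \<in> F"
  shows "i \<notin> F \<Longrightarrow> (pinv A *v u) $ i = 0"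
    and "pinv A *v vrestr u F = pinv A *v u"
proof -
  define X where "X = pinv A"
  have pe: "penrose A X" using pinv_sym[OF sA] by (simp add: X_def)
  have h1: "X = X ** (transpose X ** A)"
    using pe unfolding penrose_def by (metis matrix_mul_assoc matrix_transpose_mul sA)
  have h2: "X = A ** (transpose X ** X)"
    using pe unfolding penrose_def by (metis matrix_mul_assoc matrix_transpose_mul sA)
  show "pinv A *v vrestr u F = pinv A *v u"
  proof -
    have "A *v vrestr u F = A *v u" by (rule mv_restr) (use supp in blast)
    then have "X *v vrestr u F = X *v u"
      by (metis h1 matrix_vector_mul_assoc)
    then show ?thesis by (simp add: X_def)
  qed
  assume "i \<notin> F"
  then have "(A *v ((transpose X ** X) *v u)) $ i = 0"
    using supp by (intro mv_row0) blast
  then show "(pinv A *v u) $ i = 0"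
    by (metis h2 matrix_vector_mul_assoc X_def)
qed

lemma lap_sym: "laplacian_on S L \<Longrightarrow> L $ i $ j = L $ j $ i"
  unfolding laplacian_on_def by (metis transpose_def vec_lambda_beta)

lemma lap_colsum: "laplacian_on S L \<Longrightarrow> (\<Sum>i\<in>UNIV. L $ i $ j) = 0"
  using lap_sym[of S L] unfolding laplacian_on_def by auto

lemma lap_total: "laplacian_on S L \<Longrightarrow> (\<Sum>i\<in>UNIV. (L *v y) $ i) = 0"
proof -
  assume l: "laplacian_on S L"
  have "(\<Sum>i\<in>UNIV. (L *v y) $ i) = (\<Sum>i\<in>UNIV. \<Sum>j\<in>UNIV. L $ i $ j * y $ j)"
    by (simp add: matrix_vector_mult_def)
  also have "\<dots> = (\<Sum>j\<in>UNIV. (\<Sum>i\<in>UNIV. L $ i $ j) * y $ j)"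
    by (subst sum.swap) (simp add: sum_distrib_right)
  also have "\<dots> = 0" using lap_colsum[OF l] by simp
  finally show ?thesis .
qed

lemma lap_quad:
  fixes L :: "real^'n^'n"
  assumes l: "laplacian_on S L" and q: "k \<bullet> (L *v k) = 0" and ij: "i \<noteq> j" "L $ i $ j \<noteq> 0"
  shows "k $ i = k $ j"
proof -
  have sy: "L $ i $ j = L $ j $ i" for i j using lap_sym[OF l] .
  have rs: "(\<Sum>j\<in>UNIV. L $ i $ j) = 0" for i using l unfolding laplacian_on_def by auto
  have cs: "(\<Sum>i\<in>UNIV. L $ i $ j) = 0" for j using lap_colsum[OF l] .
  define q where "q i j = L $ i $ j * (k $ i - k $ j)^2" for i j
  have e1: "(\<Sum>i\<in>UNIV. \<Sum>j\<in>UNIV. L $ i $ j * (k $ i)^2) = 0"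
    by (simp add: sum_distrib_right[symmetric] rs)
  have e2: "(\<Sum>i\<in>UNIV. \<Sum>j\<in>UNIV. L $ i $ j * (k $ j)^2) = 0"
    by (subst sum.swap) (simp add: sum_distrib_right[symmetric] cs)
  have e3: "(\<Sum>i\<in>UNIV. \<Sum>j\<in>UNIV. L $ i $ j * (k $ i * k $ j)) = k \<bullet> (L *v k)"
    by (simp add: inner_vec_def matrix_vector_mult_def sum_distrib_left mult_ac)
  have "(\<Sum>i\<in>UNIV. \<Sum>j\<in>UNIV. q i j) =
        (\<Sum>i\<in>UNIV. \<Sum>j\<in>UNIV. L $ i $ j * (k $ i)^2) + (\<Sum>i\<in>UNIV. \<Sum>j\<in>UNIV. L $ i $ j * (k $ j)^2)
        - 2 * (\<Sum>i\<in>UNIV. \<Sum>j\<in>UNIV. L $ i $ j * (k $ i * k $ j))"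
    by (simp add: q_def power2_diff algebra_simps sum.distrib sum_subtractf sum_distrib_left)
  also have "\<dots> = 0" using e1 e2 e3 q by simp
  finally have tot: "(\<Sum>i\<in>UNIV. \<Sum>j\<in>UNIV. q i j) = 0" .
  have np: "q i j \<le> 0" for i j
  proof (cases "i = j")
    case False
    then have "L $ i $ j \<le> 0" using l unfolding laplacian_on_def by auto
    then show ?thesis unfolding q_def by (simp add: mult_nonpos_nonneg)
  qed (simp add: q_def)
  have "(\<Sum>j\<in>UNIV. - q i j) = 0" for i
  proof -
    have "(\<Sum>i\<in>UNIV. \<Sum>j\<in>UNIV. - q i j) = 0" using tot by (simp add: sum_negf)
    moreover have "\<forall>i\<in>UNIV. 0 \<le> (\<Sum>j\<in>UNIV. - q i j)" using np by (simp add: sum_nonneg)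
    ultimately show ?thesis using sum_nonneg_eq_0_iff[of UNIV "\<lambda>i. \<Sum>j\<in>UNIV. - q i j"] by simp
  qed
  then have "- q i j = 0" using np sum_nonneg_eq_0_iff[of UNIV "\<lambda>j. - q i j"] by simp
  then show ?thesis using ij(2) by (simp add: q_def)
qed

lemma lap_const:
  fixes L :: "real^'n^'n"
  assumes c: "connected_laplacian_on S L" and q: "k \<bullet> (L *v k) = 0" and ab: "a \<in> S" "b \<in> S"
  shows "k $ a = k $ b"
proof -
  have l: "laplacian_on S L" using c by (simp add: connected_laplacian_on_def)
  have "(a, b) \<in> {(i, j). i \<noteq> j \<and> L $ i $ j \<noteq> 0}\<^sup>*" using c ab by (simp add: connected_laplacian_on_def)
  then show ?thesis
  proof (induction rule: rtrancl_induct)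
    case (step y z)
    then show ?case using lap_quad[OF l q, of y z] by simp
  qed simp
qed

lemma sub_self: "t \<in> set (subtrees t)"
  by (cases t) auto

lemma sub_trans: "a \<in> set (subtrees b) \<Longrightarrow> t \<in> set (subtrees a) \<Longrightarrow> t \<in> set (subtrees b)"
  by (induction b) auto

lemma sub_height: "t \<in> set (subtrees a) \<Longrightarrow> t = a \<or> height t < height a"
  by (induction a) (auto simp: less_Suc_eq_le max.coboundedI1 max.coboundedI2 dest: le_less_trans)

lemma sub_height_le: "t \<in> set (subtrees a) \<Longrightarrow> height t \<le> height a"
  using sub_height by fastforce

lemma sub_child: "Nd h l r \<in> set (subtrees T) \<Longrightarrow> l \<in> set (subtrees T) \<and> r \<in> set (subtrees T)"
  using sub_trans[of "Nd h l r" T] sub_self by auto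

lemma sub_ok: "sep_tree_ok ends RE Bd Sep a \<Longrightarrow> t \<in> set (subtrees a) \<Longrightarrow> sep_tree_ok ends RE Bd Sep t"
  by (induction a) auto

lemma sub_not_parent: "t \<in> set (subtrees l) \<or> t \<in> set (subtrees r) \<Longrightarrow> t \<noteq> Nd h l r"
proof
  assume "t \<in> set (subtrees l) \<or> t \<in> set (subtrees r)" "t = Nd h l r"
  then have "height t \<le> height l \<or> height t \<le> height r" using sub_height_le by blast
  then show False using \<open>t = Nd h l r\<close> by auto
qed

lemma Vof_Un: "Vof ends (A \<union> B) = Vof ends A \<union> Vof ends B"
  by (auto simp: Vof_def)

lemma Vof_mono: "A \<subseteq> B \<Longrightarrow> Vof ends A \<subseteq> Vof ends B"
  by (auto simp: Vof_def)

lemma F_Bd_disj: "Fset ends RE Bd Sep t \<inter> Bd (rt t) = {}"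
  by (cases t) auto

lemma RE_mono: "sep_tree_ok ends RE Bd Sep a \<Longrightarrow> t \<in> set (subtrees a) \<Longrightarrow> RE (rt t) \<subseteq> RE (rt a)"
  by (induction a) auto

lemma F_Vof: "sep_tree_ok ends RE Bd Sep t \<Longrightarrow> Fset ends RE Bd Sep t \<subseteq> Vof ends (RE (rt t))"
proof (cases t)
  case (Nd h l r)
  assume ok: "sep_tree_ok ends RE Bd Sep t"
  then have "Sep h \<subseteq> Vof ends (RE h)" using Nd Vof_Un[of ends "RE (rt l)" "RE (rt r)"] by auto
  then show ?thesis using Nd by auto
qed auto

lemma set_chain: "A \<subseteq> B \<union> C \<Longrightarrow> C \<subseteq> U \<Longrightarrow> B \<subseteq> D \<union> E \<Longrightarrow> E \<subseteq> U \<Longrightarrow> A \<subseteq> D \<union> U"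
  by blast

lemma Bd_anc:
  "sep_tree_ok ends RE Bd Sep a \<Longrightarrow> t \<in> set (subtrees a) \<Longrightarrow>
   Bd (rt t) \<subseteq> Bd (rt a) \<union> \<Union>{Fset ends RE Bd Sep s | s. s \<in> set (subtrees a) \<and> t \<in> set (subtrees s) \<and> t \<noteq> s}"
proof (induction a)
  case (Lf h)
  then show ?case by simp
next
  case (Nd h l r)
  let ?a = "Nd h l r"
  let ?U = "\<lambda>a. \<Union>{Fset ends RE Bd Sep s | s. s \<in> set (subtrees a) \<and> t \<in> set (subtrees s) \<and> t \<noteq> s}"
  show ?case
  proof (cases "t = ?a")
    case True then show ?thesis by simp
  next
    case False
    then have tlr: "t \<in> set (subtrees l) \<or> t \<in> set (subtrees r)" using Nd.prems(2) by simp
    have subl: "set (subtrees l) \<subseteq> set (subtrees ?a)" by auto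
    have subr: "set (subtrees r) \<subseteq> set (subtrees ?a)" by auto
    have Ul: "?U l \<subseteq> ?U ?a" using subl by blast
    have Ur: "?U r \<subseteq> ?U ?a" using subr by blast
    have aa: "?a \<in> set (subtrees ?a) \<and> t \<in> set (subtrees ?a) \<and> t \<noteq> ?a"
      using False Nd.prems sub_self by blast
    have Fa: "Fset ends RE Bd Sep ?a \<subseteq> ?U ?a"
      using aa by blast
    have ok: "sep_tree_ok ends RE Bd Sep l" "sep_tree_ok ends RE Bd Sep r" using Nd.prems(1) by simp_all
    have bl: "Bd (rt l) \<subseteq> Bd h \<union> Fset ends RE Bd Sep ?a"
    proof -
      have "Bd (rt l) = (Bd h \<union> Sep h) \<inter> Vof ends (RE (rt l))" using Nd.prems(1) by simp
      then show ?thesis by auto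
    qed
    have br: "Bd (rt r) \<subseteq> Bd h \<union> Fset ends RE Bd Sep ?a"
    proof -
      have "Bd (rt r) = (Bd h \<union> Sep h) \<inter> Vof ends (RE (rt r))" using Nd.prems(1) by simp
      then show ?thesis by auto
    qed
    show ?thesis
    proof (cases "t \<in> set (subtrees l)")
      case True
      then have "Bd (rt t) \<subseteq> Bd (rt l) \<union> ?U l" using Nd.IH(1) ok(1) by blast
      then show ?thesis unfolding rt.simps by (rule set_chain[OF _ Ul bl Fa])
    next
      case False
      then have "t \<in> set (subtrees r)" using tlr by blast
      then have "Bd (rt t) \<subseteq> Bd (rt r) \<union> ?U r" using Nd.IH(2) ok(2) by blast
      then show ?thesis unfolding rt.simps by (rule set_chain[OF _ Ur br Fa])
    qed
  qed
qed

lemma set_chain2: "A \<subseteq> D \<union> U \<Longrightarrow> A' \<subseteq> D \<union> U \<Longrightarrow> A \<union> A' \<subseteq> D \<union> U"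
  by blast

lemma Vof_cover:
  "sep_tree_ok ends RE Bd Sep a \<Longrightarrow>
   Vof ends (RE (rt a)) \<subseteq> Bd (rt a) \<union> \<Union>{Fset ends RE Bd Sep s | s. s \<in> set (subtrees a)}"
proof (induction a)
  case (Lf h)
  then show ?case by auto
next
  case (Nd h l r)
  let ?a = "Nd h l r"
  let ?U = "\<lambda>a. \<Union>{Fset ends RE Bd Sep s | s. s \<in> set (subtrees a)}"
  have subl: "set (subtrees l) \<subseteq> set (subtrees ?a)" by auto
  have subr: "set (subtrees r) \<subseteq> set (subtrees ?a)" by auto
  have Ul: "?U l \<subseteq> ?U ?a" using subl by blast
  have Ur: "?U r \<subseteq> ?U ?a" using subr by blast
  have aa: "?a \<in> set (subtrees ?a)" using sub_self by blast
  have Fa: "Fset ends RE Bd Sep ?a \<subseteq> ?U ?a" using aa by blast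
  have ok: "sep_tree_ok ends RE Bd Sep l" "sep_tree_ok ends RE Bd Sep r" using Nd.prems(1) by simp_all
  have bl: "Bd (rt l) \<subseteq> Bd h \<union> Fset ends RE Bd Sep ?a"
  proof -
    have "Bd (rt l) = (Bd h \<union> Sep h) \<inter> Vof ends (RE (rt l))" using Nd.prems(1) by simp
    then show ?thesis by auto
  qed
  have br: "Bd (rt r) \<subseteq> Bd h \<union> Fset ends RE Bd Sep ?a"
  proof -
    have "Bd (rt r) = (Bd h \<union> Sep h) \<inter> Vof ends (RE (rt r))" using Nd.prems(1) by simp
    then show ?thesis by auto
  qed
  have "RE (rt l) \<union> RE (rt r) = RE h" using Nd.prems(1) by simp
  then have eq: "Vof ends (RE h) = Vof ends (RE (rt l)) \<union> Vof ends (RE (rt r))" by (metis Vof_Un)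
  have IHl: "Vof ends (RE (rt l)) \<subseteq> Bd (rt l) \<union> ?U l" using Nd.IH(1) ok(1) by blast
  have IHr: "Vof ends (RE (rt r)) \<subseteq> Bd (rt r) \<union> ?U r" using Nd.IH(2) ok(2) by blast
  have "Vof ends (RE h) \<subseteq> Bd h \<union> ?U ?a"
    unfolding eq by (rule set_chain2[OF set_chain[OF IHl Ul bl Fa] set_chain[OF IHr Ur br Fa]])
  then show ?case by simp
qed

definition outside_ok :: "('e \<Rightarrow> 'v \<times> 'v) \<Rightarrow> ('n \<Rightarrow> 'e set) \<Rightarrow> ('n \<Rightarrow> 'v set) \<Rightarrow> 'n stree \<Rightarrow> bool" where
  "outside_ok ends RE Bd a \<longleftrightarrow> (\<forall>e. e \<notin> RE (rt a) \<longrightarrow>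
      {fst (ends e), snd (ends e)} \<inter> Vof ends (RE (rt a)) \<subseteq> Bd (rt a))"

lemma outside_child:
  assumes ok: "sep_tree_ok ends RE Bd Sep (Nd h l r)" and o: "outside_ok ends RE Bd (Nd h l r)"
    and c: "(c = l \<and> c' = r) \<or> (c = r \<and> c' = l)"
  shows "outside_ok ends RE Bd c"
  unfolding outside_ok_def
proof (intro allI impI subsetI)
  have un: "RE (rt c) \<union> RE (rt c') = RE h" using ok c by auto
  have sep: "Vof ends (RE (rt c)) \<inter> Vof ends (RE (rt c')) = Sep h" using ok c by auto
  have bd: "Bd (rt c) = (Bd h \<union> Sep h) \<inter> Vof ends (RE (rt c))" using ok c by auto
  have oh: "\<forall>e. e \<notin> RE h \<longrightarrow> {fst (ends e), snd (ends e)} \<inter> Vof ends (RE h) \<subseteq> Bd h"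
    using o unfolding outside_ok_def by simp
  fix e x assume e: "e \<notin> RE (rt c)" and x: "x \<in> {fst (ends e), snd (ends e)} \<inter> Vof ends (RE (rt c))"
  show "x \<in> Bd (rt c)"
  proof (cases "e \<in> RE (rt c')")
    case True
    then have "x \<in> Vof ends (RE (rt c'))" using x unfolding Vof_def by blast
    then show ?thesis using x sep bd by blast
  next
    case False
    then have "e \<notin> RE h" using e un by blast
    moreover have "x \<in> Vof ends (RE h)" using x un unfolding Vof_def by blast
    ultimately have "x \<in> Bd h" using oh x by blast
    then show ?thesis using x bd by blast
  qed
qed

lemma outside_sub:
  "sep_tree_ok ends RE Bd Sep a \<Longrightarrow> outside_ok ends RE Bd a \<Longrightarrow> t \<in> set (subtrees a) \<Longrightarrow>
   outside_ok ends RE Bd t"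
proof (induction a)
  case (Lf h)
  then show ?case by simp
next
  case (Nd h l r)
  have ol: "outside_ok ends RE Bd l" using outside_child[OF Nd.prems(1,2), of l r] by simp
  have or: "outside_ok ends RE Bd r" using outside_child[OF Nd.prems(1,2), of r l] by simp
  have ok: "sep_tree_ok ends RE Bd Sep l" "sep_tree_ok ends RE Bd Sep r" using Nd.prems(1) by simp_all
  consider "t = Nd h l r" | "t \<in> set (subtrees l)" | "t \<in> set (subtrees r)" using Nd.prems(3) by auto
  then show ?case
  proof cases
    case 1 then show ?thesis using Nd.prems(2) by simp
  next
    case 2 then show ?thesis using Nd.IH(1)[OF ok(1) ol] by blast
  next
    case 3 then show ?thesis using Nd.IH(2)[OF ok(2) or] by blast
  qed
qed

lemma sum_mv: "finite A \<Longrightarrow> (\<Sum>a\<in>A. f a) *v x = (\<Sum>a\<in>A. f a *v x)"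
  by (induction A rule: finite_induct) (simp_all add: matrix_vector_mult_add_rdistrib)

lemma vrestr_sum: "vrestr (\<Sum>a\<in>A. f a) S = (\<Sum>a\<in>A. vrestr (f a) S)"
  by (cases "finite A") (auto simp: vec_eq_iff vrestr_def sum_component)

lemma sum_vrestr_all: "(\<Sum>i\<in>UNIV. vrestr u S $ i) = (\<Sum>x\<in>S. u $ x)"
  by (simp add: vrestr_def sum.If_cases)

lemma diag_right: "M ** diagm a = (\<chi> i j. M $ i $ j * a j)"
  by (simp add: vec_eq_iff matrix_matrix_mult_def diagm_def if_distrib if_distribR cong del: if_weak_cong)

lemma diag_left: "diagm a ** M = (\<chi> i j. a i * M $ i $ j)"
  by (simp add: vec_eq_iff matrix_matrix_mult_def diagm_def if_distrib if_distribR cong del: if_weak_cong)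

lemma submat_empty: "submat A {} T = 0"
  by (simp add: submat_def vec_eq_iff)

locale ctx =
  fixes ends :: "'e::finite \<Rightarrow> 'v::finite \<times> 'v"
    and w :: "'e \<Rightarrow> real"
    and T :: "'n stree"
    and RE :: "'n \<Rightarrow> 'e set"
    and Bd Sep :: "'n \<Rightarrow> 'v set"
    and SC :: "'n \<Rightarrow> real^'v^'v"
  assumes no_loops: "\<forall>e. fst (ends e) \<noteq> snd (ends e)"
    and conn: "graph_connected ends"
    and wpos: "\<forall>e. w e > 0"
    and distinct_nodes: "distinct (map rt (subtrees T))"
    and root_edges: "RE (rt T) = UNIV"
    and root_bd: "Bd (rt T) = {}"
    and tree_ok: "sep_tree_ok ends RE Bd Sep T"
    and F_partition: "\<forall>x. \<exists>!t. t \<in> set (subtrees T) \<and> x \<in> Fset ends RE Bd Sep t"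
    and SC_lap: "\<forall>t\<in>set (subtrees T). laplacian_on (Bd (rt t)) (SC (rt t))"
    and L_conn: "\<forall>t\<in>set (subtrees T).
                   connected_laplacian_on (Bd (rt t) \<union> Fset ends RE Bd Sep t) (Lap ends w RE SC t)"
begin

abbreviation "FF \<equiv> Fset ends RE Bd Sep"
abbreviation "LL \<equiv> Lap ends w RE SC"
abbreviation "subs \<equiv> set (subtrees T)"
abbreviation "XX \<equiv> Xop ends w RE Bd Sep SC"
definition "MF t = submat (LL t) (FF t) (FF t)"
definition "Ai t = pinv (MF t)"

lemma dist: "distinct (subtrees T)"
  using distinct_nodes distinct_map by blast

lemma ok_sub: "t \<in> subs \<Longrightarrow> sep_tree_ok ends RE Bd Sep t"
  using sub_ok tree_ok by blast

lemma Llap: "t \<in> subs \<Longrightarrow> laplacian_on (Bd (rt t) \<union> FF t) (LL t)"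
  using L_conn by (simp add: connected_laplacian_on_def)

lemma Lsym: "t \<in> subs \<Longrightarrow> transpose (LL t) = LL t"
  using Llap by (simp add: laplacian_on_def)

lemma Lsupp: "t \<in> subs \<Longrightarrow> LL t $ i $ j \<noteq> 0 \<Longrightarrow> i \<in> Bd (rt t) \<union> FF t \<and> j \<in> Bd (rt t) \<union> FF t"
  using Llap unfolding laplacian_on_def by blast

lemma MFsym: "t \<in> subs \<Longrightarrow> transpose (MF t) = MF t"
  using Lsym[of t] unfolding MF_def submat_def transpose_def
  by (simp add: vec_eq_iff)

lemma MFsupp: "MF t $ i $ j \<noteq> 0 \<Longrightarrow> i \<in> FF t \<and> j \<in> FF t"
  by (simp add: MF_def submat_def split: if_splits)

lemma Ai_supp: "t \<in> subs \<Longrightarrow> i \<notin> FF t \<Longrightarrow> (Ai t *v u) $ i = 0"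
  unfolding Ai_def using pinv_support(1)[OF MFsym MFsupp] by blast

lemma Ai_restr: "t \<in> subs \<Longrightarrow> Ai t *v vrestr u (FF t) = Ai t *v u"
  unfolding Ai_def using pinv_support(2)[OF MFsym MFsupp] by blast

lemma X_eq: "XX t = submat (LL t) (Bd (rt t)) (FF t) ** Ai t"
  by (simp add: Xop_def Ai_def MF_def)

lemma X_supp: "i \<notin> Bd (rt t) \<Longrightarrow> (XX t *v u) $ i = 0"
  unfolding X_eq matrix_vector_mul_assoc[symmetric]
  by (rule mv_row0) (simp add: submat_def)

lemma X_restr: "t \<in> subs \<Longrightarrow> XX t *v vrestr u (FF t) = XX t *v u"
  unfolding X_eq matrix_vector_mul_assoc[symmetric] using Ai_restr by simp

lemma X_zero: "Bd (rt t) = {} \<Longrightarrow> XX t = 0"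
  unfolding X_eq by (simp add: submat_empty)

lemma F_disj: "s \<in> subs \<Longrightarrow> t \<in> subs \<Longrightarrow> x \<in> FF s \<Longrightarrow> x \<in> FF t \<Longrightarrow> s = t"
  using F_partition by blast

lemma F_cover: "\<exists>t\<in>subs. x \<in> FF t"
  using F_partition by blast

lemma lvl:
  assumes t: "t \<in> subs" and t': "t' \<in> subs" and x: "x \<in> Bd (rt t')" "x \<in> FF t"
  shows "height t' < height t"
proof -
  have "Bd (rt t') \<subseteq> Bd (rt T) \<union> \<Union>{FF s | s. s \<in> subs \<and> t' \<in> set (subtrees s) \<and> t' \<noteq> s}"
    by (rule Bd_anc[OF tree_ok t'])
  then obtain s where s: "s \<in> subs" "t' \<in> set (subtrees s)" "t' \<noteq> s" "x \<in> FF s"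
    using x(1) root_bd by blast
  then have "s = t" using F_disj t x(2) by blast
  then show ?thesis using s sub_height by blast
qed

end

context ctx begin

abbreviation "PP \<equiv> PiProd ends w RE Bd Sep SC T"

lemma PiOp_mv: "PiOp ends w RE Bd Sep SC T k *v y = y - (\<Sum>t\<in>{t\<in>subs. height t = k}. XX t *v y)"
proof -
  have "sum_list (map XX (filter (\<lambda>t. height t = k) (subtrees T))) = (\<Sum>t\<in>{t\<in>subs. height t = k}. XX t)"
    using dist by (simp add: sum_list_distinct_conv_sum_set)
  then show ?thesis unfolding PiOp_def
    by (simp add: matrix_vector_mult_diff_rdistrib sum_mv)
qed

lemma PP_suc: "PP (Suc k) d = PP k d - (\<Sum>t\<in>{t\<in>subs. height t = k}. XX t *v PP k d)"
  by (simp add: PiOp_mv)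

lemma stable:
  assumes t0: "t0 \<in> subs" and x: "x \<in> FF t0"
  shows "height t0 \<le> k \<Longrightarrow> PP k d $ x = PP (height t0) d $ x"
proof (induction k)
  case 0
  then show ?case by simp
next
  case (Suc k)
  show ?case
  proof (cases "height t0 = Suc k")
    case True then show ?thesis by simp
  next
    case False
    then have le: "height t0 \<le> k" using Suc.prems by simp
    have z: "(XX t *v PP k d) $ x = 0" if "t \<in> {t\<in>subs. height t = k}" for t
    proof (rule X_supp, rule notI)
      assume "x \<in> Bd (rt t)"
      then have "height t < height t0" using lvl[OF t0 _ _ x] that by blast
      then show False using that le by simp
    qed
    have "PP (Suc k) d $ x = PP k d $ x - (\<Sum>t\<in>{t\<in>subs. height t = k}. (XX t *v PP k d) $ x)"
      unfolding PP_suc by (simp add: sum_component)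
    also have "\<dots> = PP k d $ x" using z by simp
    finally show ?thesis using Suc.IH le by simp
  qed
qed

lemma PP_expand: "PP k d = d - (\<Sum>t\<in>{t\<in>subs. height t < k}. XX t *v PP (height t) d)"
proof (induction k)
  case 0
  then show ?case by simp
next
  case (Suc k)
  let ?A = "\<Sum>t\<in>{t\<in>subs. height t < k}. XX t *v PP (height t) d"
  let ?B = "\<Sum>t\<in>{t\<in>subs. height t = k}. XX t *v PP k d"
  have un: "{t\<in>subs. height t < Suc k} = {t\<in>subs. height t < k} \<union> {t\<in>subs. height t = k}" by auto
  have dj: "{t\<in>subs. height t < k} \<inter> {t\<in>subs. height t = k} = {}" by auto
  have eq: "(\<Sum>t\<in>{t\<in>subs. height t = k}. XX t *v PP (height t) d) = ?B"
    by (rule sum.cong) simp_all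
  have U: "(\<Sum>t\<in>{t\<in>subs. height t < Suc k}. XX t *v PP (height t) d) = ?A + ?B"
    unfolding un eq[symmetric] by (rule sum.union_disjoint) (simp_all add: dj)
  have "PP (Suc k) d = PP k d - ?B" by (rule PP_suc)
  also have "\<dots> = (d - ?A) - ?B" by (rule arg_cong[where f="\<lambda>z. z - ?B", OF Suc.IH])
  also have "\<dots> = d - (?A + ?B)" by (simp only: diff_diff_eq)
  finally show ?case unfolding U .
qed

lemma fixpt: "PP (height T) d + (\<Sum>t\<in>subs. XX t *v PP (height T) d) = d"
proof -
  let ?u = "PP (height T) d"
  have trm: "XX t *v PP (height t) d = XX t *v ?u" if t: "t \<in> {t\<in>subs. height t < height T}" for t
  proof -
    have ts: "t \<in> subs" using t by simp
    have eq: "vrestr (PP (height t) d) (FF t) = vrestr ?u (FF t)"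
      unfolding vrestr_def using stable[OF ts, of _ "height T" d] sub_height_le[OF ts]
      by (simp add: vec_eq_iff)
    have "XX t *v PP (height t) d = XX t *v vrestr (PP (height t) d) (FF t)" using X_restr[OF ts] by simp
    also have "\<dots> = XX t *v vrestr ?u (FF t)" using eq by simp
    also have "\<dots> = XX t *v ?u" using X_restr[OF ts] by simp
    finally show ?thesis .
  qed
  have s1: "(\<Sum>t\<in>{t\<in>subs. height t < height T}. XX t *v ?u) = (\<Sum>t\<in>subs. XX t *v ?u)"
  proof (rule sum.mono_neutral_left)
    show "\<forall>i\<in>subs - {t \<in> subs. height t < height T}. XX i *v ?u = 0"
    proof
      fix i assume "i \<in> subs - {t \<in> subs. height t < height T}"
      then have "i = T" using sub_height by blast
      then show "XX i *v ?u = 0" using X_zero root_bd by simp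
    qed
  qed auto
  have eqsum: "(\<Sum>t\<in>{t\<in>subs. height t < height T}. XX t *v PP (height t) d) =
               (\<Sum>t\<in>{t\<in>subs. height t < height T}. XX t *v ?u)"
    by (rule sum.cong[OF refl trm])
  have e1: "?u = d - (\<Sum>t\<in>{t\<in>subs. height t < height T}. XX t *v PP (height t) d)" by (rule PP_expand)
  have e2: "?u = d - (\<Sum>t\<in>subs. XX t *v ?u)" using e1 by (simp only: eqsum s1)
  let ?S = "\<Sum>t\<in>subs. XX t *v ?u"
  have "?u + ?S = (d - ?S) + ?S" using e2 by (rule arg_cong[where f="\<lambda>z. z + ?S"])
  then show ?thesis by (simp only: diff_add_cancel)
qed

end

context ctx begin

lemma LAi:
  assumes t: "t \<in> subs" and cond: "Bd (rt t) = {} \<Longrightarrow> (\<Sum>x\<in>FF t. u $ x) = 0"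
  shows "LL t *v (Ai t *v u) = XX t *v u + vrestr u (FF t)"
proof -
  let ?S = "Bd (rt t) \<union> FF t"
  have disj: "FF t \<inter> Bd (rt t) = {}" by (rule F_Bd_disj)
  have cl: "connected_laplacian_on ?S (LL t)" using L_conn t by blast
  define y where "y = Ai t *v u"
  have ysupp: "j \<notin> FF t \<Longrightarrow> y $ j = 0" for j using Ai_supp[OF t] by (simp add: y_def)
  have split: "LL t *v y = submat (LL t) (Bd (rt t)) (FF t) *v y + MF t *v y"
  proof (subst vec_eq_iff, intro allI)
    fix i
    have "(LL t *v y) $ i = (\<Sum>j\<in>UNIV. LL t $ i $ j * y $ j)" by (simp add: matrix_vector_mult_def)
    also have "\<dots> = (\<Sum>j\<in>UNIV. (if i \<in> Bd (rt t) \<and> j \<in> FF t then LL t $ i $ j else 0) * y $ j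
                     + (if i \<in> FF t \<and> j \<in> FF t then LL t $ i $ j else 0) * y $ j)"
    proof (rule sum.cong[OF refl])
      fix j
      show "LL t $ i $ j * y $ j = (if i \<in> Bd (rt t) \<and> j \<in> FF t then LL t $ i $ j else 0) * y $ j
                     + (if i \<in> FF t \<and> j \<in> FF t then LL t $ i $ j else 0) * y $ j"
        using ysupp[of j] Lsupp[OF t, of i j] disj by auto
    qed
    also have "\<dots> = (submat (LL t) (Bd (rt t)) (FF t) *v y + MF t *v y) $ i"
      by (simp add: matrix_vector_mult_def submat_def MF_def sum.distrib)
    finally show "(LL t *v y) $ i = (submat (LL t) (Bd (rt t)) (FF t) *v y + MF t *v y) $ i" .
  qed
  have ker: "k \<bullet> vrestr u (FF t) = 0" if mk: "MF t *v k = 0" for k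
  proof -
    define k' where "k' = vrestr k (FF t)"
    have Lk': "(LL t *v k') $ i = 0" if "i \<in> FF t" for i
    proof -
      have "(LL t *v k') $ i = (MF t *v k) $ i"
        using that by (simp add: matrix_vector_mult_def MF_def submat_def k'_def vrestr_def if_distrib if_distribR cong: if_cong)
      then show ?thesis using mk by simp
    qed
    have "k' \<bullet> (LL t *v k') = (\<Sum>i\<in>UNIV. k' $ i * (LL t *v k') $ i)" by (simp add: inner_vec_def)
    also have "\<dots> = 0"
    proof (rule sum.neutral, intro ballI)
      fix i
      show "k' $ i * (LL t *v k') $ i = 0"
      proof (cases "i \<in> FF t")
        case True then show ?thesis using Lk' by simp
      next
        case False then have "k' $ i = 0" by (simp add: k'_def vrestr_def)
        then show ?thesis by simp
      qed
    qed
    finally have q: "k' \<bullet> (LL t *v k') = 0" .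
    have const: "k' $ a = k' $ b" if "a \<in> ?S" "b \<in> ?S" for a b
      by (rule lap_const[OF cl q that])
    have "k \<bullet> vrestr u (FF t) = (\<Sum>x\<in>FF t. k $ x * u $ x)"
      by (simp add: inner_vec_def vrestr_def if_distrib if_distribR sum.If_cases cong del: if_weak_cong)
    also have "\<dots> = 0"
    proof (cases "Bd (rt t) = {}")
      case False
      then obtain b where b: "b \<in> Bd (rt t)" by blast
      have "k $ x = 0" if "x \<in> FF t" for x
      proof -
        have "k' $ x = k' $ b" using const that b by blast
        moreover have "k' $ b = 0" using b disj by (auto simp: k'_def vrestr_def)
        ultimately show ?thesis using that by (simp add: k'_def vrestr_def)
      qed
      then show ?thesis by simp
    next
      case True
      show ?thesis
      proof (cases "FF t = {}")
        case True then show ?thesis by simp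
      next
        case False
        then obtain a where a: "a \<in> FF t" by blast
        have "k $ x = k $ a" if "x \<in> FF t" for x
          using const[of x a] that a by (simp add: k'_def vrestr_def)
        then have "(\<Sum>x\<in>FF t. k $ x * u $ x) = k $ a * (\<Sum>x\<in>FF t. u $ x)"
          by (simp add: sum_distrib_left)
        then show ?thesis using cond[OF \<open>Bd (rt t) = {}\<close>] by simp
      qed
    qed
    finally show ?thesis .
  qed
  have "MF t *v y = vrestr u (FF t)"
  proof -
    have "MF t *v y = MF t *v (pinv (MF t) *v vrestr u (FF t))"
      using Ai_restr[OF t, of u] by (simp add: y_def Ai_def)
    also have "\<dots> = vrestr u (FF t)" by (rule pinv_range[OF MFsym[OF t]]) (rule ker)
    finally show ?thesis .
  qed
  moreover have "submat (LL t) (Bd (rt t)) (FF t) *v y = XX t *v u"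
    by (simp add: X_eq y_def matrix_vector_mul_assoc)
  ultimately show ?thesis using split by (simp add: y_def)
qed

lemma Xsum:
  assumes t: "t \<in> subs" and b: "Bd (rt t) \<noteq> {}"
  shows "(\<Sum>i\<in>UNIV. (XX t *v u) $ i) = - (\<Sum>x\<in>FF t. u $ x)"
proof -
  have "LL t *v (Ai t *v u) = XX t *v u + vrestr u (FF t)" using LAi[OF t] b by blast
  moreover have "(\<Sum>i\<in>UNIV. (LL t *v (Ai t *v u)) $ i) = 0" by (rule lap_total[OF Llap[OF t]])
  ultimately have "(\<Sum>i\<in>UNIV. (XX t *v u) $ i) + (\<Sum>i\<in>UNIV. vrestr u (FF t) $ i) = 0"
    by (simp add: sum.distrib)
  then show ?thesis by (simp add: sum_vrestr_all)
qed

end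

context ctx begin

lemma D_subs: "S0 \<in> subs \<Longrightarrow> set (subtrees S0) \<subseteq> subs"
  using sub_trans by blast

lemma outside_T: "outside_ok ends RE Bd T"
  using root_edges by (simp add: outside_ok_def)

lemma ends_Z:
  assumes S0: "S0 \<in> subs" "Bd (rt S0) = {}"
  shows "fst (ends e) \<in> \<Union>(FF ` set (subtrees S0)) \<longleftrightarrow> snd (ends e) \<in> \<Union>(FF ` set (subtrees S0))"
proof (cases "e \<in> RE (rt S0)")
  case True
  have "Vof ends (RE (rt S0)) \<subseteq> Bd (rt S0) \<union> \<Union>{FF s | s. s \<in> set (subtrees S0)}"
    by (rule Vof_cover[OF ok_sub[OF S0(1)]])
  moreover have "fst (ends e) \<in> Vof ends (RE (rt S0))" "snd (ends e) \<in> Vof ends (RE (rt S0))"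
    using True unfolding Vof_def by blast+
  ultimately show ?thesis using S0(2) by blast
next
  case False
  have no: "x \<notin> \<Union>(FF ` set (subtrees S0))" if x: "x = fst (ends e) \<or> x = snd (ends e)" for x
  proof
    assume "x \<in> \<Union>(FF ` set (subtrees S0))"
    then obtain a where a: "a \<in> set (subtrees S0)" "x \<in> FF a" by blast
    have aS: "a \<in> subs" using a(1) D_subs[OF S0(1)] by blast
    have oa: "outside_ok ends RE Bd a" by (rule outside_sub[OF tree_ok outside_T aS])
    have xV: "x \<in> Vof ends (RE (rt a))" using F_Vof[OF ok_sub[OF aS]] a(2) by blast
    have "e \<in> RE (rt a)"
    proof (rule ccontr)
      assume "e \<notin> RE (rt a)"
      then have "x \<in> Bd (rt a)" using oa xV x unfolding outside_ok_def by blast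
      then show False using F_Bd_disj[of ends RE Bd Sep a] a(2) by blast
    qed
    moreover have "RE (rt a) \<subseteq> RE (rt S0)" by (rule RE_mono[OF ok_sub[OF S0(1)] a(1)])
    ultimately show False using False by blast
  qed
  show ?thesis using no by blast
qed

lemma d_comp:
  "((transpose (incid ends) ** diagm (\<lambda>e. sqrt (w e))) *v v) $ x =
   (\<Sum>e\<in>UNIV. sqrt (w e) * v $ e * incid ends $ e $ x)"
  by (simp add: diag_right matrix_vector_mult_def transpose_def mult_ac)

lemma incid_sum:
  "(\<Sum>x\<in>Z. incid ends $ e $ x) = (if fst (ends e) \<in> Z then 1 else 0) - (if snd (ends e) \<in> Z then 1 else 0)"
proof -
  have ne: "fst (ends e) \<noteq> snd (ends e)" using no_loops by blast
  have "(\<Sum>x\<in>Z. incid ends $ e $ x) = (\<Sum>x\<in>Z. (if x = fst (ends e) then 1 else 0) - (if x = snd (ends e) then 1 else 0))"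
    by (rule sum.cong) (use ne in \<open>auto simp: incid_def\<close>)
  also have "\<dots> = (if fst (ends e) \<in> Z then 1 else 0) - (if snd (ends e) \<in> Z then 1 else 0)"
    by (simp add: sum_subtractf)
  finally show ?thesis .
qed

lemma dZ:
  assumes S0: "S0 \<in> subs" "Bd (rt S0) = {}"
  shows "(\<Sum>x\<in>\<Union>(FF ` set (subtrees S0)). ((transpose (incid ends) ** diagm (\<lambda>e. sqrt (w e))) *v v) $ x) = 0"
proof -
  let ?Z = "\<Union>(FF ` set (subtrees S0))"
  have "(\<Sum>x\<in>?Z. ((transpose (incid ends) ** diagm (\<lambda>e. sqrt (w e))) *v v) $ x) =
        (\<Sum>e\<in>UNIV. sqrt (w e) * v $ e * (\<Sum>x\<in>?Z. incid ends $ e $ x))"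
    by (simp add: d_comp sum_distrib_left) (rule sum.swap)
  also have "\<dots> = 0"
    by (rule sum.neutral) (use ends_Z[OF S0] in \<open>simp add: incid_sum\<close>)
  finally show ?thesis .
qed

lemma main_step:
  assumes fx: "u + (\<Sum>t\<in>subs. XX t *v u) = d'"
    and S0: "S0 \<in> subs" "Bd (rt S0) = {}"
    and dz: "(\<Sum>x\<in>\<Union>(FF ` set (subtrees S0)). d' $ x) = 0"
  shows "(\<Sum>a\<in>{a\<in>set (subtrees S0). Bd (rt a) = {}}. (\<Sum>x\<in>FF a. u $ x)) = 0"
proof -
  define D where "D = set (subtrees S0)"
  define Z where "Z = \<Union>(FF ` D)"
  define s where "s a = (\<Sum>x\<in>FF a. u $ x)" for a
  have DS: "D \<subseteq> subs" using D_subs[OF S0(1)] by (simp add: D_def)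
  have finD: "finite D" by (simp add: D_def)
  have "(\<Sum>x\<in>Z. u $ x + (\<Sum>t\<in>subs. XX t *v u) $ x) = (\<Sum>x\<in>Z. d' $ x)"
    using fx by (metis vector_add_component)
  then have e0: "(\<Sum>x\<in>Z. u $ x) + (\<Sum>x\<in>Z. (\<Sum>t\<in>subs. XX t *v u) $ x) = 0"
    using dz by (simp add: sum.distrib Z_def D_def)
  have e1: "(\<Sum>x\<in>Z. u $ x) = (\<Sum>a\<in>D. s a)"
    unfolding Z_def s_def
  proof (rule sum.UNION_disjoint[OF finD])
    show "\<forall>i\<in>D. finite (FF i)" by simp
    show "\<forall>i\<in>D. \<forall>j\<in>D. i \<noteq> j \<longrightarrow> FF i \<inter> FF j = {}"
      using F_disj DS by blast
  qed
  define g where "g t = (\<Sum>x\<in>Z. (XX t *v u) $ x)" for t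
  have e2: "(\<Sum>x\<in>Z. (\<Sum>t\<in>subs. XX t *v u) $ x) = (\<Sum>t\<in>subs. g t)"
    unfolding g_def by (simp add: sum_component) (rule sum.swap)
  have gout: "g t = 0" if t: "t \<in> subs" "t \<notin> D" for t
    unfolding g_def
  proof (rule sum.neutral, intro ballI)
    fix x assume "x \<in> Z"
    then obtain a where a: "a \<in> D" "x \<in> FF a" by (auto simp: Z_def)
    show "(XX t *v u) $ x = 0"
    proof (rule X_supp, rule notI)
      assume "x \<in> Bd (rt t)"
      moreover have "Bd (rt t) \<subseteq> Bd (rt T) \<union> \<Union>{FF s | s. s \<in> subs \<and> t \<in> set (subtrees s) \<and> t \<noteq> s}"
        by (rule Bd_anc[OF tree_ok t(1)])
      ultimately obtain s where s: "s \<in> subs" "t \<in> set (subtrees s)" "x \<in> FF s"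
        using root_bd by blast
      have "s = a" using F_disj[OF s(1) _ s(3) a(2)] a(1) DS by blast
      then have "t \<in> D" using s(2) a(1) sub_trans unfolding D_def by blast
      then show False using t(2) by blast
    qed
  qed
  have gin: "g t = (if Bd (rt t) = {} then 0 else - s t)" if t: "t \<in> D" for t
  proof (cases "Bd (rt t) = {}")
    case True then show ?thesis by (simp add: g_def X_zero)
  next
    case False
    have tS: "t \<in> subs" using t DS by blast
    have BZ: "Bd (rt t) \<subseteq> Z"
    proof -
      have "Bd (rt t) \<subseteq> Bd (rt S0) \<union> \<Union>{FF s | s. s \<in> set (subtrees S0) \<and> t \<in> set (subtrees s) \<and> t \<noteq> s}"
        by (rule Bd_anc[OF ok_sub[OF S0(1)]]) (use t in \<open>simp add: D_def\<close>)
      then show ?thesis using S0(2) unfolding Z_def D_def by blast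
    qed
    have "g t = (\<Sum>x\<in>UNIV. (XX t *v u) $ x)"
      unfolding g_def by (rule sum.mono_neutral_left) (use BZ X_supp in auto)
    also have "\<dots> = - s t" using Xsum[OF tS False] by (simp add: s_def)
    finally show ?thesis using False by simp
  qed
  have e3: "(\<Sum>t\<in>subs. g t) = (\<Sum>t\<in>D. g t)"
    by (rule sum.mono_neutral_right) (use DS gout in auto)
  have "(\<Sum>a\<in>D. s a) + (\<Sum>t\<in>D. (if Bd (rt t) = {} then 0 else - s t)) = 0"
    using e0 e1 e2 e3 gin by simp
  then have "(\<Sum>a\<in>D. s a + (if Bd (rt a) = {} then 0 else - s a)) = 0"
    by (simp add: sum.distrib)
  moreover have "(\<Sum>a\<in>D. s a + (if Bd (rt a) = {} then 0 else - s a)) = (\<Sum>a\<in>D. if Bd (rt a) = {} then s a else 0)"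
    by (rule sum.cong) auto
  ultimately have "(\<Sum>a\<in>D. if Bd (rt a) = {} then s a else 0) = 0" by simp
  then show ?thesis using sum.inter_filter[OF finD, of s "\<lambda>a. Bd (rt a) = {}"]
    by (simp add: D_def s_def)
qed

lemma sumcond:
  assumes fx: "u + (\<Sum>t\<in>subs. XX t *v u) = d'"
    and dz: "\<And>S0. S0 \<in> subs \<Longrightarrow> Bd (rt S0) = {} \<Longrightarrow> (\<Sum>x\<in>\<Union>(FF ` set (subtrees S0)). d' $ x) = 0"
  shows "S0 \<in> subs \<Longrightarrow> a \<in> set (subtrees S0) \<Longrightarrow> Bd (rt a) = {} \<Longrightarrow> (\<Sum>x\<in>FF a. u $ x) = 0"
proof -
  have step2: "(\<Sum>x\<in>FF S0. u $ x) = 0"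
    if S0: "S0 \<in> subs" "Bd (rt S0) = {}"
      and rest: "\<And>a'. a' \<in> set (subtrees S0) \<Longrightarrow> a' \<noteq> S0 \<Longrightarrow> Bd (rt a') = {} \<Longrightarrow> (\<Sum>x\<in>FF a'. u $ x) = 0"
    for S0
  proof -
    let ?P = "{a\<in>set (subtrees S0). Bd (rt a) = {}}"
    have i1: "Bd (rt S0) = {}" by (rule S0(2))
    have i2: "S0 \<in> set (subtrees S0)" by (rule sub_self)
    have inP: "S0 \<in> ?P" using i1 i2 by blast
    have "0 = (\<Sum>a\<in>?P. (\<Sum>x\<in>FF a. u $ x))" using main_step[OF fx S0 dz[OF S0]] by simp
    also have "\<dots> = (\<Sum>x\<in>FF S0. u $ x) + (\<Sum>a\<in>?P - {S0}. (\<Sum>x\<in>FF a. u $ x))"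
      by (rule sum.remove) (use inP in auto)
    also have "(\<Sum>a\<in>?P - {S0}. (\<Sum>x\<in>FF a. u $ x)) = 0"
      by (rule sum.neutral) (use rest in auto)
    finally show ?thesis by simp
  qed
  show "S0 \<in> subs \<Longrightarrow> a \<in> set (subtrees S0) \<Longrightarrow> Bd (rt a) = {} \<Longrightarrow> (\<Sum>x\<in>FF a. u $ x) = 0"
  proof (induction S0 arbitrary: a)
    case (Lf h)
    then have a: "a = Lf h" by simp
    have "(\<Sum>x\<in>FF (Lf h). u $ x) = 0"
      by (rule step2) (use Lf.prems a in auto)
    then show ?case using a by simp
  next
    case (Nd h l r)
    have lr: "l \<in> subs" "r \<in> subs" using sub_child[OF Nd.prems(1)] by auto
    have rest: "(\<Sum>x\<in>FF a'. u $ x) = 0"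
      if "a' \<in> set (subtrees (Nd h l r))" "a' \<noteq> Nd h l r" "Bd (rt a') = {}" for a'
    proof -
      have "a' \<in> set (subtrees l) \<or> a' \<in> set (subtrees r)" using that by simp
      then show ?thesis using Nd.IH lr that(3) by blast
    qed
    show ?case
    proof (cases "a = Nd h l r")
      case True
      then show ?thesis using step2[OF Nd.prems(1) _ rest] Nd.prems(3) by blast
    next
      case False
      then show ?thesis using rest Nd.prems(2,3) by blast
    qed
  qed
qed

end

lemma mv_sum: "finite S \<Longrightarrow> A *v (\<Sum>a\<in>S. f a) = (\<Sum>a\<in>S. A *v f a)"
  by (induction S rule: finite_induct) (simp_all add: matrix_vector_right_distrib)

lemma lap_supp: "laplacian_on S A \<Longrightarrow> A $ i $ j \<noteq> 0 \<Longrightarrow> i \<in> S \<and> j \<in> S"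
  unfolding laplacian_on_def by auto

lemma lap_rows: "laplacian_on S A \<Longrightarrow> (\<Sum>j\<in>UNIV. A $ i $ j) = 0"
  unfolding laplacian_on_def by auto

context ctx begin

lemma SCsym: "t \<in> subs \<Longrightarrow> transpose (SC (rt t)) = SC (rt t)"
  using SC_lap by (simp add: laplacian_on_def)

lemma SC_proj:
  assumes c: "c \<in> subs"
  shows "LL c ** (pinv (LL c) ** SC (rt c)) = SC (rt c)"
proof -
  let ?S = "SC (rt c)"
  have sl: "laplacian_on (Bd (rt c)) ?S" using SC_lap c by blast
  have cl: "connected_laplacian_on (Bd (rt c) \<union> FF c) (LL c)" using L_conn c by blast
  have SCk: "?S *v k = 0" if k: "LL c *v k = 0" for k
  proof -
    have q: "k \<bullet> (LL c *v k) = 0" using k by simp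
    have const: "k $ a = k $ b" if "a \<in> Bd (rt c)" "b \<in> Bd (rt c)" for a b
      using lap_const[OF cl q] that by blast
    show ?thesis
    proof (cases "Bd (rt c) = {}")
      case True
      then have "?S $ i $ j = 0" for i j using lap_supp[OF sl, of i j] by blast
      then show ?thesis by (simp add: vec_eq_iff matrix_vector_mult_def)
    next
      case False
      then obtain b where b: "b \<in> Bd (rt c)" by blast
      show ?thesis
      proof (subst vec_eq_iff, intro allI)
        fix i
        have "(?S *v k) $ i = (\<Sum>j\<in>UNIV. ?S $ i $ j * k $ j)" by (simp add: matrix_vector_mult_def)
        also have "\<dots> = (\<Sum>j\<in>UNIV. ?S $ i $ j * k $ b)"
        proof (rule sum.cong[OF refl])
          fix j
          show "?S $ i $ j * k $ j = ?S $ i $ j * k $ b"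
          proof (cases "?S $ i $ j = 0")
            case False
            then have "j \<in> Bd (rt c)" using lap_supp[OF sl, of i j] by blast
            then have "k $ j = k $ b" by (rule const[OF _ b])
            then show ?thesis by simp
          qed simp
        qed
        also have "\<dots> = (\<Sum>j\<in>UNIV. ?S $ i $ j) * k $ b" by (simp add: sum_distrib_right)
        also have "\<dots> = 0" using lap_rows[OF sl, of i] by simp
        finally show "(?S *v k) $ i = 0 $ i" by simp
      qed
    qed
  qed
  show ?thesis
  proof (subst matrix_eq, intro allI)
    fix x
    have "LL c *v (pinv (LL c) *v (?S *v x)) = ?S *v x"
    proof (rule pinv_range[OF Lsym[OF c]])
      fix k assume "LL c *v k = 0"
      then have "?S *v k = 0" by (rule SCk)
      moreover have "k \<bullet> (?S *v x) = (?S *v k) \<bullet> x"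
        using sym_dot[OF SCsym[OF c], of k x] by (simp add: inner_commute)
      ultimately show "k \<bullet> (?S *v x) = 0" by simp
    qed
    then show "(LL c ** (pinv (LL c) ** ?S)) *v x = ?S *v x"
      by (simp add: matrix_vector_mul_assoc[symmetric])
  qed
qed

lemma leaf_eq:
  "(transpose (incid ends) ** diagm (\<lambda>e. sqrt (w e))) ** (diagm (\<lambda>e. sqrt (w e)) ** incid_on ends E) =
   transpose (incid_on ends E) ** diagm w ** incid_on ends E"
proof -
  have wp: "0 < w e" for e using wpos by blast
  have sw2: "\<bar>w e\<bar> = w e" for e by (rule abs_of_pos[OF wp])
  have sw: "sqrt (w e) * sqrt (w e) = w e" for e by (simp add: sw2)
  have "(\<Sum>e\<in>UNIV. incid ends $ e $ i * sqrt (w e) * (sqrt (w e) * incid_on ends E $ e $ j)) =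
        (\<Sum>e\<in>UNIV. incid_on ends E $ e $ i * w e * incid_on ends E $ e $ j)" for i j
  proof (rule sum.cong[OF refl])
    fix e
    have "incid ends $ e $ i * sqrt (w e) * (sqrt (w e) * incid_on ends E $ e $ j) =
          incid ends $ e $ i * (sqrt (w e) * sqrt (w e)) * incid_on ends E $ e $ j" by (simp add: mult_ac)
    also have "\<dots> = incid_on ends E $ e $ i * w e * incid_on ends E $ e $ j"
      by (simp add: sw sw2 incid_on_def)
    finally show "incid ends $ e $ i * sqrt (w e) * (sqrt (w e) * incid_on ends E $ e $ j) =
        incid_on ends E $ e $ i * w e * incid_on ends E $ e $ j" .
  qed
  note fact = this
  show ?thesis unfolding diag_right diag_left
  proof (subst vec_eq_iff, intro allI, subst vec_eq_iff, intro allI)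
    fix i j
    show "((\<chi> i j. transpose (incid ends) $ i $ j * sqrt (w j)) ** (\<chi> i j. sqrt (w i) * incid_on ends E $ i $ j)) $ i $ j =
          ((\<chi> i j. transpose (incid_on ends E) $ i $ j * w j) ** incid_on ends E) $ i $ j"
      unfolding matrix_matrix_mult_def vec_lambda_beta transpose_def by (rule fact)
  qed
qed

lemma BWM: "t \<in> subs \<Longrightarrow>
  (transpose (incid ends) ** diagm (\<lambda>e. sqrt (w e))) ** Mrec ends w RE SC t = LL t"
proof (induction t)
  case (Lf h)
  show ?case by (simp only: Mrec.simps Lap.simps leaf_eq)
next
  case (Nd h l r)
  let ?BW = "transpose (incid ends) ** diagm (\<lambda>e. sqrt (w e))"
  have lr: "l \<in> subs" "r \<in> subs" using sub_child[OF Nd.prems] by auto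
  have "?BW ** Mrec ends w RE SC (Nd h l r) =
        (?BW ** Mrec ends w RE SC l) ** (pinv (LL l) ** SC (rt l)) +
        (?BW ** Mrec ends w RE SC r) ** (pinv (LL r) ** SC (rt r))"
    by (simp only: Mrec.simps matrix_add_ldistrib matrix_mul_assoc)
  also have "\<dots> = LL l ** (pinv (LL l) ** SC (rt l)) + LL r ** (pinv (LL r) ** SC (rt r))"
    using Nd.IH(1)[OF lr(1)] Nd.IH(2)[OF lr(2)] by (simp only:)
  also have "\<dots> = SC (rt l) + SC (rt r)"
    using SC_proj[OF lr(1)] SC_proj[OF lr(2)] by (simp only:)
  finally show ?case by (simp only: Lap.simps)
qed

lemma zrestr:
  assumes t: "t \<in> subs"
  shows "vrestr (GammaT ends w RE Bd Sep SC T *v u) (FF t) = Ai t *v u"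
proof -
  have G: "GammaT ends w RE Bd Sep SC T = (\<Sum>t'\<in>subs. Ai t')"
    unfolding GammaT_def Ai_def MF_def using dist by (simp add: sum_list_distinct_conv_sum_set)
  have each: "vrestr (Ai t' *v u) (FF t) = (if t' = t then Ai t *v u else 0)" if t': "t' \<in> subs" for t'
  proof (cases "t' = t")
    case True
    then show ?thesis using Ai_supp[OF t] by (auto simp: vec_eq_iff vrestr_def)
  next
    case False
    have "i \<in> FF t \<Longrightarrow> (Ai t' *v u) $ i = 0" for i
      using Ai_supp[OF t'] F_disj[OF t' t] False by blast
    then show ?thesis using False by (auto simp: vec_eq_iff vrestr_def)
  qed
  have "vrestr (GammaT ends w RE Bd Sep SC T *v u) (FF t) = (\<Sum>t'\<in>subs. vrestr (Ai t' *v u) (FF t))"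
    unfolding G by (simp add: sum_mv vrestr_sum)
  also have "\<dots> = (\<Sum>t'\<in>subs. if t' = t then Ai t *v u else 0)"
    by (rule sum.cong[OF refl each])
  also have "\<dots> = Ai t *v u" using t by simp
  finally show ?thesis .
qed

lemma partition_sum: "(\<Sum>t\<in>subs. vrestr u (FF t)) = u"
proof (subst vec_eq_iff, intro allI)
  fix i
  obtain t0 where t0: "t0 \<in> subs" "i \<in> FF t0" using F_cover by blast
  have "(\<Sum>t\<in>subs. vrestr u (FF t)) $ i = (\<Sum>t\<in>subs. vrestr u (FF t) $ i)"
    by (rule sum_component)
  also have "\<dots> = (\<Sum>t\<in>subs. if t = t0 then u $ i else 0)"
  proof (rule sum.cong[OF refl])
    fix x assume x: "x \<in> subs"
    show "vrestr u (FF x) $ i = (if x = t0 then u $ i else 0)"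
    proof (cases "x = t0")
      case True then show ?thesis using t0(2) by (simp add: vrestr_def)
    next
      case False
      then have "i \<notin> FF x" using F_disj[OF x t0(1) _ t0(2)] by blast
      then show ?thesis using False by (simp add: vrestr_def)
    qed
  qed
  also have "\<dots> = u $ i" using t0(1) by (simp only: sum.delta[OF finite_set] if_True)
  finally show "(\<Sum>t\<in>subs. vrestr u (FF t)) $ i = u $ i" .
qed

lemma main:
  "let B = incid ends;
         Wh = diagm (\<lambda>e. sqrt (w e));
         d = transpose B ** Wh *v v;
         z = GammaT ends w RE Bd Sep SC T *v PiProd ends w RE Bd Sep SC T (height T) d;
         f = sum_list (map (\<lambda>t. Mrec ends w RE SC t *v vrestr z (Fset ends RE Bd Sep t)) (subtrees T))
     in transpose B ** Wh *v f = transpose B ** Wh *v v"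
proof -
  define BW where "BW = transpose (incid ends) ** diagm (\<lambda>e. sqrt (w e))"
  define d where "d = BW *v v"
  define u where "u = PP (height T) d"
  define z where "z = GammaT ends w RE Bd Sep SC T *v u"
  have fx: "u + (\<Sum>t\<in>subs. XX t *v u) = d" unfolding u_def by (rule fixpt)
  have cond: "(\<Sum>x\<in>FF t. u $ x) = 0" if "t \<in> subs" "Bd (rt t) = {}" for t
    by (rule sumcond[OF fx _ that(1) sub_self that(2)]) (use dZ in \<open>simp add: d_def BW_def\<close>)
  have "BW *v sum_list (map (\<lambda>t. Mrec ends w RE SC t *v vrestr z (FF t)) (subtrees T))
        = BW *v (\<Sum>t\<in>subs. Mrec ends w RE SC t *v vrestr z (FF t))"
    using dist by (simp add: sum_list_distinct_conv_sum_set)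
  also have "\<dots> = (\<Sum>t\<in>subs. (BW ** Mrec ends w RE SC t) *v vrestr z (FF t))"
    by (simp add: mv_sum matrix_vector_mul_assoc)
  also have "\<dots> = (\<Sum>t\<in>subs. LL t *v (Ai t *v u))"
    by (rule sum.cong[OF refl]) (simp add: BW_def BWM z_def zrestr)
  also have "\<dots> = (\<Sum>t\<in>subs. XX t *v u + vrestr u (FF t))"
    by (rule sum.cong[OF refl]) (rule LAi, simp_all add: cond)
  also have "\<dots> = (\<Sum>t\<in>subs. XX t *v u) + u"
    by (simp add: sum.distrib partition_sum)
  also have "\<dots> = d" using fx by (simp add: add.commute)
  finally show ?thesis by (simp add: Let_def BW_def d_def u_def z_def)
qed

end

theorem mainTheorem13:
  fixes ends :: "'e::finite \<Rightarrow> 'v::finite \<times> 'v"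
    and w :: "'e \<Rightarrow> real"
    and T :: "'n stree"
    and RE :: "'n \<Rightarrow> 'e set"
    and Bd Sep :: "'n \<Rightarrow> 'v set"
    and SC :: "'n \<Rightarrow> real^'v^'v"
    and v :: "real^'e"
  assumes no_loops: "\<forall>e. fst (ends e) \<noteq> snd (ends e)"
    and conn: "graph_connected ends"
    and wpos: "\<forall>e. w e > 0"
    and distinct_nodes: "distinct (map rt (subtrees T))"
    and root_edges: "RE (rt T) = UNIV"
    and root_bd: "Bd (rt T) = {}"
    and tree_ok: "sep_tree_ok ends RE Bd Sep T"
    and F_partition: "\<forall>x. \<exists>!t. t \<in> set (subtrees T) \<and> x \<in> Fset ends RE Bd Sep t"
    and SC_lap: "\<forall>t\<in>set (subtrees T). laplacian_on (Bd (rt t)) (SC (rt t))"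
    and L_conn: "\<forall>t\<in>set (subtrees T).
                   connected_laplacian_on (Bd (rt t) \<union> Fset ends RE Bd Sep t) (Lap ends w RE SC t)"
  shows
    "let B = incid ends;
         Wh = diagm (\<lambda>e. sqrt (w e));
         d = transpose B ** Wh *v v;
         z = GammaT ends w RE Bd Sep SC T *v PiProd ends w RE Bd Sep SC T (height T) d;
         f = sum_list (map (\<lambda>t. Mrec ends w RE SC t *v vrestr z (Fset ends RE Bd Sep t)) (subtrees T))
     in transpose B ** Wh *v f = transpose B ** Wh *v v"
  proof -
  interpret c: ctx ends w T RE Bd Sep SC
    by unfold_locales (fact+)
  show ?thesis by (rule c.main)
qed

end
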